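(* The L\'evy measure $Q$ of a time-stable process is supported by the set $\{f\in\mathbb{R}^{[0,\infty)}\setminus\{0\}:\ f(0)=0\}$, i.e. $Q(\{f:\ f(0)\neq0\})=0$.
   Context: For a process $\eta$ on $[0,\infty)$ and $a>0$, $(a\circ\eta)(t)=\eta(at)$. A stochastically continuous real-valued process $\xi(t)$, $t\geq0$, is time-stable if for each integer $n\geq2$, $\xi_1+\cdots+\xi_n$ and $n\circ\xi$ have the same finite-dimensional distributions, where $\xi_1,\dots,\xi_n$ are i.i.d. copies of $\xi$. L\'evy measure: an infinitely divisible stochastically continuous process $\xi$ (its Gaussian part, if any, removed) admits a representation in which there is a deterministic function $c$ on $[0,\infty)$ and a $\sigma$-finite measure $Q$ on $\mathbb{R}^{[0,\infty)}\setminus\{0\}$ (cylindrical $\sigma$-algebra, completed with respect to $Q$) with $\int\min(1,f(t)^2)Q(df)<\infty$ for all $t\geq0$, such that for all $k\geq1$, $t_1,\dots,t_k\geq0$, $\theta_1,\dots,\theta_k\in\mathbb{R}$, $$\mathbb{E}e^{\mathrm{i}\sum_j\theta_j\xi(t_j)}=\exp\Big\{\mathrm{i}\sum_j\theta_jc(t_j)+\int\Big[e^{\mathrm{i}\sum_j\theta_jf(t_j)}-1-\mathrm{i}\sum_j\theta_jL(f(t_j))\Big]Q(df)\Big\},$$ where $L(u)=u$ for $|u|\le1$, $L(u)=1$ for $u>1$, $L(u)=-1$ for $u<-1$. (Equivalently $\xi(t)$ equals in law $c(t)$ plus the compensated sum of the values at $t$ of the points of a Poisson process on $\mathbb{R}^{[0,\infty)}\setminus\{0\}$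 with intensity $Q$.) The representation can be chosen minimal: the $\sigma$-algebra generated by the sets $\{f:f(t)\in A\}$, $t\ge0$, $A$ Borel, coincides with the cylindrical $\sigma$-algebra up to $Q$-null sets, and there is no measurable $B$ with $Q(B)>0$ such that $Q(\{f\in B: f(t)\neq0\})=0$ for every $t\geq0$. The minimal representation is unique up to isomorphism; its $Q$ is called the L\'evy measure of $\xi$. *)

theory Defs
  imports "HOL-Probability.Probability"
begin

definition trunc_L :: "real \<Rightarrow> real" where
  "trunc_L u = (if \<bar>u\<bar> \<le> 1 then u else if u > 1 then 1 else -1)"

abbreviation path_space :: "(real \<Rightarrow> real) measure" where
  "path_space \<equiv> Pi\<^sub>M {0::real..} (\<lambda>_. (borel :: real measure))"

abbreviation zero_path :: "real \<Rightarrow> real" where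
  "zero_path \<equiv> restrict (\<lambda>_. 0) {0::real..}"

definition same_fdd ::
  "'a measure \<Rightarrow> (real \<Rightarrow> 'a \<Rightarrow> real) \<Rightarrow> 'b measure \<Rightarrow> (real \<Rightarrow> 'b \<Rightarrow> real) \<Rightarrow> bool" where
  "same_fdd M X N Y \<longleftrightarrow>
     (\<forall>T. finite T \<and> T \<subseteq> {0..} \<longrightarrow>
        distr M (Pi\<^sub>M T (\<lambda>_. borel)) (\<lambda>\<omega>. \<lambda>t\<in>T. X t \<omega>)
      = distr N (Pi\<^sub>M T (\<lambda>_. borel)) (\<lambda>\<omega>. \<lambda>t\<in>T. Y t \<omega>))"

definition real_process :: "'a measure \<Rightarrow> (real \<Rightarrow> 'a \<Rightarrow> real) \<Rightarrow> bool" where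
  "real_process M X \<longleftrightarrow> prob_space M \<and> (\<forall>t\<ge>0. X t \<in> borel_measurable M)"

definition stoch_continuous :: "'a measure \<Rightarrow> (real \<Rightarrow> 'a \<Rightarrow> real) \<Rightarrow> bool" where
  "stoch_continuous M X \<longleftrightarrow>
     (\<forall>t\<ge>0. \<forall>\<epsilon>>0. ((\<lambda>s. measure M {\<omega>\<in>space M. \<epsilon> < \<bar>X s \<omega> - X t \<omega>\<bar>}) \<longlongrightarrow> 0)
                      (at t within {0..}))"

text \<open>Time-stability: for every n \<ge> 2, the sum of n i.i.d. copies of X
  (realised canonically on the n-fold product space) has the same
  finite-dimensional distributions as the time-scaled process t \<mapsto> X (n t).\<close>
definition time_stable :: "'a measure \<Rightarrow> (real \<Rightarrow> 'a \<Rightarrow> real) \<Rightarrow> bool" where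
  "time_stable M X \<longleftrightarrow> real_process M X \<and> stoch_continuous M X \<and>
     (\<forall>n::nat. n \<ge> 2 \<longrightarrow>
        same_fdd (Pi\<^sub>M {..<n} (\<lambda>_. M)) (\<lambda>t \<omega>. \<Sum>i<n. X t (\<omega> i))
                 M (\<lambda>t \<omega>. X (real n * t) \<omega>))"

definition levy_representation ::
  "'a measure \<Rightarrow> (real \<Rightarrow> 'a \<Rightarrow> real) \<Rightarrow> (real \<Rightarrow> real) \<Rightarrow> (real \<Rightarrow> real \<Rightarrow> real)
    \<Rightarrow> (real \<Rightarrow> real) measure \<Rightarrow> bool" where
  "levy_representation M X c K Q \<longleftrightarrow>
     (\<forall>s t. K s t = K t s) \<and>
     (\<forall>T \<theta>. finite T \<and> T \<subseteq> {0..} \<longrightarrow> 0 \<le> (\<Sum>s\<in>T. \<Sum>t\<in>T. \<theta> s * \<theta> t * K s t)) \<and>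
     sets Q = sets (restrict_space path_space (space path_space - {zero_path})) \<and>
     sigma_finite_measure Q \<and>
     (\<forall>t\<ge>0. (\<integral>\<^sup>+ f. ennreal (min 1 ((f t)\<^sup>2)) \<partial>Q) < \<infinity>) \<and>
     (\<forall>T \<theta>. finite T \<and> T \<subseteq> {0..} \<longrightarrow>
        (\<integral>\<omega>. cis (\<Sum>t\<in>T. \<theta> t * X t \<omega>) \<partial>M)
        = exp (\<i> * complex_of_real (\<Sum>t\<in>T. \<theta> t * c t)
               - complex_of_real ((1/2) * (\<Sum>s\<in>T. \<Sum>t\<in>T. \<theta> s * \<theta> t * K s t))
               + (\<integral>f. cis (\<Sum>t\<in>T. \<theta> t * f t) - 1
                        - \<i> * complex_of_real (\<Sum>t\<in>T. \<theta> t * trunc_L (f t)) \<partial>Q)))"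

text \<open>Minimality (the generating condition is automatic for the cylindrical
  sigma-algebra): no set of positive Q-measure on which all coordinates vanish
  Q-a.e.\<close>
definition levy_minimal :: "(real \<Rightarrow> real) measure \<Rightarrow> bool" where
  "levy_minimal Q \<longleftrightarrow>
     \<not> (\<exists>B\<in>sets Q. emeasure Q B > 0 \<and> (\<forall>t\<ge>0. emeasure Q {f\<in>B. f t \<noteq> 0} = 0))"

definition is_levy_measure :: "'a measure \<Rightarrow> (real \<Rightarrow> 'a \<Rightarrow> real) \<Rightarrow> (real \<Rightarrow> real) measure \<Rightarrow> bool" where
  "is_levy_measure M X Q \<longleftrightarrow> (\<exists>c K. levy_representation M X c K Q) \<and> levy_minimal Q"

end

theory Submission
  imports Defs "HOL-Probability.Characteristic_Functions"
begin

lemma ts_char: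
  assumes ts: "time_stable M X"
  shows "(\<integral>\<omega>. cis (h * X 0 \<omega>) \<partial>M) = (\<integral>\<omega>. cis (h * X 0 \<omega>) \<partial>M) * (\<integral>\<omega>. cis (h * X 0 \<omega>) \<partial>M)"
proof -
  have rp: "prob_space M" and Xm[measurable]: "X 0 \<in> borel_measurable M"
    using ts unfolding time_stable_def real_process_def by auto
  interpret prob_space M by fact
  have sf: "same_fdd (Pi\<^sub>M {..<2::nat} (\<lambda>_. M)) (\<lambda>t \<omega>. \<Sum>i<(2::nat). X t (\<omega> i)) M (\<lambda>t \<omega>. X (real 2 * t) \<omega>)"
    using ts unfolding time_stable_def by auto
  let ?P = "Pi\<^sub>M {..<2::nat} (\<lambda>_. M)"
  let ?N = "Pi\<^sub>M {0::real} (\<lambda>_. (borel::real measure))"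
  have eq: "distr ?P ?N (\<lambda>\<omega>. \<lambda>t\<in>{0}. \<Sum>i<2. X t (\<omega> i)) = distr M ?N (\<lambda>\<omega>. \<lambda>t\<in>{0}. X (real 2 * t) \<omega>)"
    using sf unfolding same_fdd_def by (metis finite.emptyI finite_insert empty_subsetI insert_subset atLeast_iff order_refl)
  have c0: "(\<lambda>x::real. cis (h*x)) \<in> borel_measurable borel"
    unfolding cis_conv_exp by (intro borel_measurable_continuous_onI continuous_intros)
  have p0: "(\<lambda>g. g 0) \<in> borel_measurable ?N"
    by (rule measurable_component_singleton) simp
  have Fm: "(\<lambda>g. cis (h * g 0)) \<in> borel_measurable ?N"
    using measurable_compose[OF p0 c0] by simp
  have cm: "(\<lambda>\<omega>. cis (h * X 0 \<omega>)) \<in> borel_measurable M"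
    using measurable_compose[OF Xm c0] by simp
  have m1: "(\<lambda>\<omega>. \<lambda>t\<in>{0::real}. \<Sum>i<2. X t (\<omega> i)) \<in> measurable ?P ?N"
  proof (rule measurable_restrict)
    fix t :: real assume "t \<in> {0}"
    then show "(\<lambda>\<omega>. \<Sum>i<2. X t (\<omega> i)) \<in> measurable ?P borel" by simp measurable
  qed
  have m2: "(\<lambda>\<omega>. \<lambda>t\<in>{0::real}. X (real 2 * t) \<omega>) \<in> measurable M ?N"
  proof (rule measurable_restrict)
    fix t :: real assume "t \<in> {0}"
    then show "(\<lambda>\<omega>. X (real 2 * t) \<omega>) \<in> measurable M borel" by simp
  qed
  have "(\<integral>g. cis (h * g 0) \<partial>distr ?P ?N (\<lambda>\<omega>. \<lambda>t\<in>{0}. \<Sum>i<2. X t (\<omega> i)))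
      = (\<integral>\<omega>. cis (h * (\<Sum>i<2. X 0 (\<omega> i))) \<partial>?P)"
    using integral_distr[OF m1 Fm] by simp
  also have "\<dots> = (\<integral>\<omega>. (\<Prod>i\<in>{..<2::nat}. cis (h * X 0 (\<omega> i))) \<partial>?P)"
    by (simp add: numeral_2_eq_2 cis_mult distrib_left)
  also have "\<dots> = (\<Prod>i\<in>{..<2::nat}. (\<integral>\<omega>. cis (h * X 0 \<omega>) \<partial>M))"
  proof -
    interpret product_sigma_finite "\<lambda>_. M"
      by (simp add: product_sigma_finite_def sigma_finite_measure_axioms)
    show ?thesis
      by (rule product_integral_prod) (auto intro!: integrable_const_bound[where B=1] simp: cm)
  qed
  also have "\<dots> = (\<integral>\<omega>. cis (h * X 0 \<omega>) \<partial>M) * (\<integral>\<omega>. cis (h * X 0 \<omega>) \<partial>M)"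
    by (simp add: numeral_2_eq_2)
  finally have A: "(\<integral>g. cis (h * g 0) \<partial>distr ?P ?N (\<lambda>\<omega>. \<lambda>t\<in>{0}. \<Sum>i<2. X t (\<omega> i))) = \<dots>" .
  have "(\<integral>g. cis (h * g 0) \<partial>distr M ?N (\<lambda>\<omega>. \<lambda>t\<in>{0}. X (real 2 * t) \<omega>)) = (\<integral>\<omega>. cis (h * X 0 \<omega>) \<partial>M)"
    using integral_distr[OF m2 Fm] by simp
  with A eq show ?thesis by simp
qed

lemma trunc_L_alt: "trunc_L = (\<lambda>u. max (-1) (min 1 u))"
  by (rule ext) (auto simp: trunc_L_def)

lemma g_bound:
  fixes h y :: real
  shows "norm (cis (h * y) - 1 - \<i> * complex_of_real (h * trunc_L y)) \<le> (2 + \<bar>h\<bar> + h\<^sup>2) * min 1 (y\<^sup>2)"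
proof (cases "\<bar>y\<bar> \<le> 1")
  case True
  have "y\<^sup>2 \<le> 1" using True by (simp add: abs_square_le_1)
  have a: "norm (cis (h*y) - (\<Sum>k\<le>1. (\<i> * (h*y))^k / fact k)) \<le> \<bar>h*y\<bar>^2 / fact 2"
    using iexp_approx1[of "h*y" 1] by (simp add: cis_conv_exp numeral_2_eq_2)
  have b: "(\<Sum>k\<le>1. (\<i> * complex_of_real (h*y))^k / fact k) = 1 + \<i> * complex_of_real (h*y)"
    by simp
  have "norm (cis (h * y) - 1 - \<i> * complex_of_real (h * trunc_L y)) \<le> \<bar>h*y\<bar>^2 / 2"
    using a b True by (simp add: trunc_L_def diff_diff_eq)
  also have "\<dots> \<le> h\<^sup>2 * y\<^sup>2" by (simp add: power_mult_distrib)
  also have "\<dots> \<le> (2 + \<bar>h\<bar> + h\<^sup>2) * y\<^sup>2" by (intro mult_right_mono) auto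
  finally show ?thesis using \<open>y\<^sup>2 \<le> 1\<close> by (simp add: min_def)
next
  case False
  then have "1 \<le> y\<^sup>2" by (simp add: abs_square_less_1 not_less[symmetric])
  have tl: "\<bar>trunc_L y\<bar> = 1" using False by (auto simp: trunc_L_def)
  have "norm (cis (h * y) - 1 - \<i> * complex_of_real (h * trunc_L y))
        \<le> norm (cis (h*y)) + norm (1::complex) + norm (\<i> * complex_of_real (h * trunc_L y))"
    by (meson norm_triangle_ineq4 order.trans add_right_mono)
  also have "\<dots> = 2 + \<bar>h\<bar>" by (simp add: norm_mult abs_mult tl)
  also have "\<dots> \<le> (2 + \<bar>h\<bar> + h\<^sup>2) * min 1 (y\<^sup>2)" using \<open>1 \<le> y\<^sup>2\<close> by (simp add: min_def)
  finally show ?thesis .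
qed

lemma cos_all_one:
  fixes x :: real
  assumes "\<forall>n::nat. cos (x / 2^n) = 1"
  shows "x = 0"
proof (rule ccontr)
  assume "x \<noteq> 0"
  obtain n :: nat where n: "\<bar>x\<bar> / (2*pi) < 2^n"
    using real_arch_pow[of 2 "\<bar>x\<bar> / (2*pi)"] by auto
  have p: "(0::real) < 2^n" by simp
  have c: "cos (x / 2^n) = 1" using assms by blast
  have "\<exists>k::int. x / 2^n = real_of_int k * 2 * pi"
    using c by (simp only: cos_one_2pi_int)
  then obtain k :: int where k: "x / 2^n = real_of_int k * 2 * pi" by blast
  have "\<bar>x / 2^n\<bar> < 2 * pi"
    using n p pi_gt_zero by (simp add: field_simps)
  then have "\<bar>real_of_int k\<bar> * (2*pi) < 1 * (2*pi)" using k by (simp add: abs_mult)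
  then have "\<bar>real_of_int k\<bar> < 1" using pi_gt_zero by (meson mult_less_cancel_right_pos pi_gt_zero mult_pos_pos zero_less_numeral)
  then have "k = 0" by linarith
  with k p \<open>x \<noteq> 0\<close> show False by simp
qed

theorem lemma3p2:
  fixes M :: "'a measure" and X :: "real \<Rightarrow> 'a \<Rightarrow> real" and Q :: "(real \<Rightarrow> real) measure"
  assumes "time_stable M X"
    and "is_levy_measure M X Q"
  shows "emeasure Q {f \<in> space Q. f 0 \<noteq> 0} = 0"
proof -
  obtain c K where LR: "levy_representation M X c K Q"
    using assms(2) unfolding is_levy_measure_def by auto
  note LR' = LR[unfolded levy_representation_def]
  have sQ: "sets Q = sets (restrict_space path_space (space path_space - {zero_path}))"
    using LR' by blast
  have fin0: "(\<integral>\<^sup>+ f. ennreal (min 1 ((f 0)\<^sup>2)) \<partial>Q) < \<infinity>"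
    using LR' by auto
  have K0: "0 \<le> K 0 0"
    using LR' [THEN conjunct2, THEN conjunct1, rule_format, of "{0}" "\<lambda>_. 1"] by simp
  have p0[measurable]: "(\<lambda>f. f 0) \<in> borel_measurable Q"
  proof -
    have "(\<lambda>f::real\<Rightarrow>real. f 0) \<in> borel_measurable path_space"
      by (rule measurable_component_singleton) simp
    then have "(\<lambda>f::real\<Rightarrow>real. f 0) \<in> borel_measurable (restrict_space path_space (space path_space - {zero_path}))"
      by (rule measurable_restrict_space1)
    moreover have "measurable Q (borel::real measure) = measurable (restrict_space path_space (space path_space - {zero_path})) borel"
      by (rule measurable_cong_sets[OF sQ refl])
    ultimately show ?thesis by simp
  qed
  have tLm[measurable]: "trunc_L \<in> borel_measurable borel"
    unfolding trunc_L_alt by measurable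
  have key: "AE f in Q. cos (h * f 0) = 1" for h :: real
  proof -
    define g where "g = (\<lambda>f::real \<Rightarrow> real. cis (h * f 0) - 1 - \<i> * complex_of_real (h * trunc_L (f 0)))"
    have cism: "(\<lambda>x::real. cis x) \<in> borel_measurable borel"
      unfolding cis_conv_exp by (intro borel_measurable_continuous_onI continuous_intros)
    have gm: "g \<in> borel_measurable Q"
      unfolding g_def by measurable (rule measurable_compose[OF _ cism], measurable)
    have im: "integrable Q (\<lambda>f. min 1 ((f 0)\<^sup>2))"
      by (rule integrableI_nonneg) (use fin0 in \<open>auto simp: infinity_ennreal_def\<close>)
    have gi: "integrable Q g"
    proof (rule Bochner_Integration.integrable_bound[OF _ gm])
      show "integrable Q (\<lambda>f. (2 + \<bar>h\<bar> + h\<^sup>2) * min 1 ((f 0)\<^sup>2))"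
        using im by simp
      show "AE f in Q. norm (g f) \<le> norm ((2 + \<bar>h\<bar> + h\<^sup>2) * min 1 ((f 0)\<^sup>2))"
        using g_bound[of h] by (auto simp: g_def)
    qed
    have rep: "(\<integral>\<omega>. cis (h * X 0 \<omega>) \<partial>M) = exp (\<i> * complex_of_real (h * c 0)
               - complex_of_real ((1/2) * (h * h * K 0 0)) + integral\<^sup>L Q g)"
      using LR'[THEN conjunct2, THEN conjunct2, THEN conjunct2, THEN conjunct2, THEN conjunct2,
          rule_format, of "{0}" "\<lambda>_. h"]
      by (simp add: g_def)
    define z where "z = \<i> * complex_of_real (h * c 0)
               - complex_of_real ((1/2) * (h * h * K 0 0)) + integral\<^sup>L Q g"
    have "exp z = exp z * exp z" using ts_char[OF assms(1), of h] rep z_def by simp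
    then have "exp z = 1" by (metis exp_not_eq_zero mult_cancel_left1)
    then have "exp (Re z) = 1" using norm_exp_eq_Re[of z] by simp
    then have "Re z = 0" by simp
    moreover have "Re z = - ((1/2) * (h * h * K 0 0)) + (\<integral>f. Re (g f) \<partial>Q)"
      using gi by (simp add: z_def)
    moreover have Rg: "Re (g f) = cos (h * f 0) - 1" for f by (simp add: g_def cis.sel)
    ultimately have I0: "(\<integral>f. cos (h * f 0) - 1 \<partial>Q) = ((1/2) * (h * h * K 0 0))"
      by simp
    have e1: "(\<integral>f. 1 - cos (h * f 0) \<partial>Q) = - (\<integral>f. cos (h * f 0) - 1 \<partial>Q)"
      by (subst Bochner_Integration.integral_minus[symmetric]) simp
    have I: "(\<integral>f. 1 - cos (h * f 0) \<partial>Q) = - ((1/2) * (h * h * K 0 0))"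
      using e1 I0 by simp
    have ri: "integrable Q (\<lambda>f. 1 - cos (h * f 0))"
    proof -
      have "integrable Q (\<lambda>f. - Re (g f))" using gi by simp
      then show ?thesis by (simp add: Rg)
    qed
    have "(\<integral>f. 1 - cos (h * f 0) \<partial>Q) \<ge> 0" by (rule integral_nonneg_AE) auto
    moreover have "h * h * K 0 0 \<ge> 0" using K0 by simp
    ultimately have "(\<integral>f. 1 - cos (h * f 0) \<partial>Q) = 0" using I by linarith
    then have "AE f in Q. 1 - cos (h * f 0) = 0"
      using integral_nonneg_eq_0_iff_AE[OF ri] by simp
    then show ?thesis by simp
  qed
  have "AE f in Q. \<forall>n::nat. cos ((1/2^n) * f 0) = 1"
  proof (subst AE_all_countable, intro allI)
    fix n :: nat show "AE f in Q. cos ((1/2^n) * f 0) = 1" by (rule key)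
  qed
  then have "AE f in Q. f 0 = 0"
    by (rule AE_mp) (auto intro!: cos_all_one)
  moreover have S: "{f \<in> space Q. f 0 \<noteq> 0} \<in> sets Q"
  proof -
    have "(\<lambda>f. f 0) -` (- {0}) \<inter> space Q \<in> sets Q"
      by (rule measurable_sets[OF p0]) simp
    moreover have "(\<lambda>f. f 0) -` (- {0}) \<inter> space Q = {f \<in> space Q. f 0 \<noteq> 0}" by auto
    ultimately show ?thesis by simp
  qed
  moreover have "(AE f in Q. f 0 = 0) \<longleftrightarrow> emeasure Q {f \<in> space Q. f 0 \<noteq> 0} = 0"
    by (rule AE_iff_measurable[OF S]) simp
  ultimately show ?thesis by blast
qed

end
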